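(* For every integer $r\ge2$, $$ \begin{aligned} \int_0^{\frac\pi2} \theta^{r-2}\log\left(\cos\frac\theta2\right)d\theta &=-\frac{\log2}{r-1}\left(\frac\pi2\right)^{r-1}+(r-2)!\sin\left(\frac{r\pi}{2}\right)\zeta_E(r) \\ &\quad+\sum_{k=0}^{\lfloor \frac{r-2}{2}\rfloor }(-1)^k(2k)!\binom{r-2}{2k}\left(\frac\pi2\right)^{r-2k-2}\beta(2k+2) \\ &\quad+\sum_{k=1}^{\lceil \frac{r-2}2\rceil}\frac{(-1)^{k-1}(2k-1)!}{2^{2k+1}}\binom{r-2}{2k-1}\left(\frac\pi2\right)^{r-2k-1}\zeta_E(2k+1). \end{aligned} $$
   Context: $\zeta_E(s)=\sum_{n=1}^\infty\frac{(-1)^{n+1}}{n^s}=(1-2^{1-s})\zeta(s)$ (alternating zeta function), $\beta(s)=\sum_{n=0}^\infty\frac{(-1)^n}{(2n+1)^s}$ (Dirichlet beta function). $\lfloor\cdot\rfloor$, $\lceil\cdot\rceil$ are floor and ceiling; an empty sum is $0$. *)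

theory Defs
  imports "HOL-Analysis.Analysis"
begin

definition zeta_E :: "real \<Rightarrow> real" where
  "zeta_E s = (\<Sum>n. (-1) ^ n / (real (n + 1)) powr s)"

definition dbeta :: "real \<Rightarrow> real" where
  "dbeta s = (\<Sum>n. (-1) ^ n / (real (2 * n + 1)) powr s)"

end

theory Submission
  imports Defs
begin


fun Fa :: "real \<Rightarrow> nat \<Rightarrow> real \<Rightarrow> real \<Rightarrow> real" where
  "Fa x 0 p t = - cos (x*t+p) / x"
| "Fa x (Suc m) p t = - (t^(Suc m) * cos (x*t+p)) / x - real (Suc m) / x * Fa x m (p - pi/2) t"

lemma sin_mhalf: "sin (y + (p - pi/2)) = - cos (y + p)"
proof -
  have "sin (y + (p - pi/2)) = sin ((y+p) - pi/2)" by (simp add: algebra_simps)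
  also have "\<dots> = - cos (y+p)" by (simp add: sin_diff)
  finally show ?thesis .
qed

lemma Fa_deriv:
  assumes "x \<noteq> 0"
  shows "(Fa x m p has_real_derivative t^m * sin (x*t+p)) (at t)"
proof (induction m arbitrary: p)
  case 0
  show ?case
    by (auto intro!: derivative_eq_intros simp: assms)
next
  case (Suc m)
  have "((\<lambda>t. - (t^(Suc m) * cos (x*t+p)) / x - real (Suc m) / x * Fa x m (p - pi/2) t)
     has_real_derivative - (real (Suc m) * t^m * cos (x*t+p) - t^(Suc m) * (sin (x*t+p) * x)) / x
        - real (Suc m) / x * (t^m * sin (x*t+(p-pi/2)))) (at t)"
    by (rule derivative_eq_intros Suc[of "p - pi/2"] refl | simp add: assms)+
       (cases m, auto simp: algebra_simps)
  moreover have "- (real (Suc m) * t^m * cos (x*t+p) - t^(Suc m) * (sin (x*t+p) * x)) / x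
        - real (Suc m) / x * (t^m * sin (x*t+(p-pi/2))) = t^Suc m * sin (x*t+p)"
    unfolding sin_mhalf using assms by (simp add: field_simps)
  ultimately show ?case by (simp add: fun_eq_iff)
qed

lemma Fa_closed:
  "Fa x m p t = (\<Sum>j\<le>m. (-1)^j * fact j * real (m choose j) * t^(m-j) * sin (x*t+p-(real j+1)*pi/2) / x^(j+1))"
proof (induction m arbitrary: p)
  case 0
  then show ?case by (simp add: sin_diff)
next
  case (Suc m)
  have "(\<Sum>j\<le>Suc m. (-1)^j * fact j * real (Suc m choose j) * t^(Suc m-j) * sin (x*t+p-(real j+1)*pi/2) / x^(j+1))
     = - (t^(Suc m) * cos (x*t+p)) / x + (\<Sum>j\<le>m. (-1)^(Suc j) * fact (Suc j) * real (Suc m choose Suc j) * t^(m-j) * sin (x*t+p-(real (Suc j)+1)*pi/2) / x^(Suc j+1))"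
    by (subst sum.atMost_Suc_shift) (simp add: sin_diff)
  also have "(\<Sum>j\<le>m. (-1)^(Suc j) * fact (Suc j) * real (Suc m choose Suc j) * t^(m-j) * sin (x*t+p-(real (Suc j)+1)*pi/2) / x^(Suc j+1))
     = - (real (Suc m) / x * (\<Sum>j\<le>m. (-1)^j * fact j * real (m choose j) * t^(m-j) * sin (x*t+(p-pi/2)-(real j+1)*pi/2) / x^(j+1)))"
    unfolding sum_distrib_left sum_negf[symmetric]
  proof (rule sum.cong[OF refl])
    fix j assume "j \<in> {..m}"
    have b: "real (Suc m choose Suc j) * real (Suc j) = real (Suc m) * real (m choose j)"
      by (metis Suc_times_binomial_eq of_nat_mult mult.commute)
    have s: "x*t+p-(real (Suc j)+1)*pi/2 = x*t+(p-pi/2)-(real j+1)*pi/2" by (simp add: algebra_simps)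
    have b': "real (Suc m choose Suc j) = real (Suc m) * real (m choose j) / real (Suc j)"
      using b by (simp add: field_simps del: binomial_Suc_Suc of_nat_Suc)
    show "(-1)^(Suc j) * fact (Suc j) * real (Suc m choose Suc j) * t^(m-j) * sin (x*t+p-(real (Suc j)+1)*pi/2) / x^(Suc j+1)
      = - (real (Suc m) / x * ((-1)^j * fact j * real (m choose j) * t^(m-j) * sin (x*t+(p-pi/2)-(real j+1)*pi/2) / x^(j+1)))"
      unfolding s fact_Suc b' by (simp add: field_simps del: binomial_Suc_Suc of_nat_Suc)
  qed
  finally show ?case by (simp add: Suc[of "p - pi/2"])
qed


lemma I_closed:
  assumes "n > 0"
  shows "integral {0..pi/2} (\<lambda>t. t^m * cos (real n*t)) = Fa (real n) m (pi/2) (pi/2) - Fa (real n) m (pi/2) 0"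
proof -
  have "((\<lambda>t. t^m * sin (real n*t + pi/2)) has_integral (Fa (real n) m (pi/2) (pi/2) - Fa (real n) m (pi/2) 0)) {0..pi/2}"
    apply (rule fundamental_theorem_of_calculus)
     apply simp
    apply (rule has_vector_derivative_at_within)
    using Fa_deriv[of "real n" m "pi/2"] assms
    by (simp add: has_real_derivative_iff_has_vector_derivative)
  moreover have "(\<lambda>t. t^m * sin (real n*t + pi/2)) = (\<lambda>t. t^m * cos (real n*t))"
    by (simp add: sin_add)
  ultimately show ?thesis by (simp add: integral_unique)
qed

lemma sum_last_only: "(\<And>j. j < (m::nat) \<Longrightarrow> f j = (0::real)) \<Longrightarrow> (\<Sum>j\<le>m. f j) = f m"
proof -
  assume h: "\<And>j. j < m \<Longrightarrow> f j = (0::real)"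
  have "(\<Sum>j\<le>m. f j) = (\<Sum>j\<le>m. if j = m then f m else 0)"
    by (rule sum.cong) (auto intro!: h)
  also have "\<dots> = f m" by simp
  finally show ?thesis .
qed

lemma b_decomp:
  "(-1)^Suc n / real n * integral {0..pi/2} (\<lambda>t. t^m * cos (real n*t)) =
   (\<Sum>j\<le>m. ((-1)^j * fact j * real (m choose j) * (pi/2)^(m-j)) * ((-1)^Suc n * sin ((real n - real j)*pi/2) / real n^(j+2)))
   + ((-1)^m * fact m * sin (real m*pi/2)) * ((-1)^Suc n / real n^(m+2))"
proof (cases "n = 0")
  case True then show ?thesis by simp
next
  case False
  then have n: "n > 0" by simp
  have A: "Fa (real n) m (pi/2) (pi/2) = (\<Sum>j\<le>m. (-1)^j * fact j * real (m choose j) * (pi/2)^(m-j) * sin ((real n - real j)*pi/2) / real n^(j+1))"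
    unfolding Fa_closed
  proof (rule sum.cong[OF refl])
    fix j
    have e: "real n * (pi/2) + pi/2 - (real j+1)*pi/2 = (real n - real j)*pi/2" by (simp add: algebra_simps)
    show "(-1)^j * fact j * real (m choose j) * (pi/2)^(m-j) * sin (real n * (pi/2) + pi/2 - (real j+1)*pi/2) / real n^(j+1)
       = (-1)^j * fact j * real (m choose j) * (pi/2)^(m-j) * sin ((real n - real j)*pi/2) / real n^(j+1)" unfolding e by (rule refl)
  qed
  have B0: "Fa (real n) m (pi/2) 0 = (-1)^m * fact m * sin (pi/2 - (real m+1)*pi/2) / real n^(m+1)"
    unfolding Fa_closed by (subst sum_last_only) auto
  have "pi/2 - (real m+1)*pi/2 = - (real m * pi/2)" by (simp add: algebra_simps)
  then have B: "Fa (real n) m (pi/2) 0 = - ((-1)^m * fact m * sin (real m*pi/2) / real n^(m+1))"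
    using B0 by simp
  show ?thesis
    unfolding I_closed[OF n] A B sum_distrib_left
    using n by (simp add: sum_distrib_left field_simps sum_divide_distrib sum_negf)
qed

lemma log_series:
  fixes \<rho> \<theta> :: real
  assumes "0 \<le> \<rho>" "\<rho> < 1"
  shows "(\<lambda>n. (-1)^Suc n / real n * \<rho>^n * cos (real n * \<theta>)) sums (ln (1 + 2*\<rho>*cos \<theta> + \<rho>^2) / 2)"
proof -
  define z where "z = complex_of_real \<rho> * cis \<theta>"
  have nz: "norm z < 1" using assms by (simp add: z_def norm_mult)
  from sums_Re[OF Ln_series[OF nz]]
  have *: "(\<lambda>n. Re ((-1)^Suc n / of_nat n * z^n)) sums Re (Ln (1 + z))" .
  have e1: "Re ((-1)^Suc n / of_nat n * z^n) = (-1)^Suc n / real n * \<rho>^n * cos (real n * \<theta>)" for n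
  proof -
    have zn: "z^n = complex_of_real (\<rho>^n) * cis (real n * \<theta>)"
      by (simp add: z_def power_mult_distrib Complex.DeMoivre)
    have "(-1)^Suc n / of_nat n * z^n = complex_of_real ((-1)^Suc n / real n * \<rho>^n) * cis (real n * \<theta>)"
      unfolding zn by simp
    then show ?thesis by (simp only:) simp
  qed
  have z1: "1 + z \<noteq> 0"
  proof
    assume "1 + z = 0" then have "z = -1" by (simp add: add_eq_0_iff)
    with nz show False by simp
  qed
  have X: "(norm (1+z))^2 = 1 + 2*\<rho>*cos \<theta> + \<rho>^2"
    unfolding cmod_power2 by (simp add: z_def power2_eq_square algebra_simps) (metis sin_cos_squared_add3 distrib_left mult.assoc mult.right_neutral)
  have "Re (Ln (1 + z)) = ln (norm (1+z))" using z1 by simp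
  also have "\<dots> = ln ((norm (1+z))^2) / 2" using z1 by (simp add: ln_realpow)
  also have "\<dots> = ln (1 + 2*\<rho>*cos \<theta> + \<rho>^2) / 2" by (simp add: X)
  finally have eq: "Re (Ln (1 + z)) = ln (1 + 2*\<rho>*cos \<theta> + \<rho>^2) / 2" .
  show ?thesis using * by (simp only: e1 eq)
qed

lemma abs_coef_le: "\<bar>(-1)^Suc n / real n\<bar> \<le> (1::real)"
  by (cases n) (auto simp: divide_simps)

lemma geom_partial_le:
  fixes \<rho> :: real
  assumes "0 \<le> \<rho>" "\<rho> < 1"
  shows "(\<Sum>n<N. \<rho>^n) \<le> 1 / (1 - \<rho>)"
proof -
  have "summable (\<lambda>n. \<rho>^n)" using assms by (intro summable_geometric) simp
  then have "(\<Sum>n<N. \<rho>^n) \<le> (\<Sum>n. \<rho>^n)"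
    by (rule sum_le_suminf) (use assms in auto)
  also have "\<dots> = 1 / (1 - \<rho>)" using assms by (simp add: suminf_geometric)
  finally show ?thesis .
qed

lemma interchange:
  fixes \<rho> :: real
  assumes r0: "0 \<le> \<rho>" and r1: "\<rho> < 1"
  shows "(\<lambda>n. \<rho>^n * ((-1)^Suc n / real n * integral {0..pi/2} (\<lambda>t. t^m * cos (real n*t))))
           sums integral {0..pi/2} (\<lambda>t. t^m * (ln (1 + 2*\<rho>*cos t + \<rho>^2) / 2))"
proof -
  define f where "f N t = (\<Sum>n<N. ((-1)^Suc n / real n * \<rho>^n) * (t^m * cos (real n*t)))" for N t
  have int: "(\<lambda>t. t^m * cos (real n * t)) integrable_on {0..pi/2}" for n
    by (intro integrable_continuous_interval continuous_intros)
  have fi: "f N integrable_on {0..pi/2}" for N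
    unfolding f_def by (intro integrable_continuous_interval continuous_intros)
  have intf: "integral {0..pi/2} (f N) = (\<Sum>n<N. \<rho>^n * ((-1)^Suc n / real n * integral {0..pi/2} (\<lambda>t. t^m * cos (real n*t))))" for N
    unfolding f_def
    apply (subst integral_sum)
      apply simp
     apply (intro integrable_continuous_interval continuous_intros)
    apply (rule sum.cong[OF refl])
    apply (subst integral_mult_right)
    apply (simp add: ac_simps)
    done
  have bnd: "norm (f N t) \<le> (pi/2)^m * (1 / (1 - \<rho>))" if t: "t \<in> {0..pi/2}" for N t
  proof -
    have tm: "\<bar>t^m\<bar> \<le> (pi/2)^m" using t by (simp add: power_abs power_mono)
    have "norm (f N t) \<le> (\<Sum>n<N. \<bar>((-1)^Suc n / real n * \<rho>^n) * (t^m * cos (real n*t))\<bar>)"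
      unfolding f_def real_norm_def by (rule sum_abs)
    also have "\<dots> \<le> (\<Sum>n<N. \<rho>^n * (pi/2)^m)"
    proof (rule sum_mono)
      fix n
      have "\<bar>((-1)^Suc n / real n * \<rho>^n) * (t^m * cos (real n*t))\<bar>
          = \<bar>(-1)^Suc n / real n\<bar> * \<rho>^n * (\<bar>t^m\<bar> * \<bar>cos (real n*t)\<bar>)"
        using r0 by (simp add: abs_mult)
      also have "\<dots> \<le> 1 * \<rho>^n * ((pi/2)^m * 1)"
        by (intro mult_mono abs_coef_le tm abs_cos_le_one) (use r0 in auto)
      finally show "\<bar>((-1)^Suc n / real n * \<rho>^n) * (t^m * cos (real n*t))\<bar> \<le> \<rho>^n * (pi/2)^m" by simp
    qed
    also have "\<dots> = (pi/2)^m * (\<Sum>n<N. \<rho>^n)" by (simp add: sum_distrib_right mult.commute)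
    also have "\<dots> \<le> (pi/2)^m * (1 / (1 - \<rho>))"
      by (intro mult_left_mono geom_partial_le r0 r1) simp
    finally show ?thesis .
  qed
  have conv: "(\<lambda>N. f N t) \<longlonglongrightarrow> t^m * (ln (1 + 2*\<rho>*cos t + \<rho>^2) / 2)" for t
  proof -
    have "(\<lambda>N. \<Sum>n<N. (-1)^Suc n / real n * \<rho>^n * cos (real n * t)) \<longlonglongrightarrow> ln (1 + 2*\<rho>*cos t + \<rho>^2) / 2"
      using log_series[OF r0 r1, of t] unfolding sums_def .
    from tendsto_mult_left[OF this, of "t^m"] show ?thesis
      unfolding f_def by (simp add: sum_distrib_left ac_simps)
  qed
  have "(\<lambda>N. integral {0..pi/2} (f N)) \<longlonglongrightarrow> integral {0..pi/2} (\<lambda>t. t^m * (ln (1 + 2*\<rho>*cos t + \<rho>^2) / 2))"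
    by (rule dominated_convergence(2)[OF fi integrable_const_ivl bnd conv])
  then show ?thesis unfolding sums_def intf .
qed


definition bb :: "nat \<Rightarrow> nat \<Rightarrow> real" where
  "bb m n = (-1)^Suc n / real n * integral {0..pi/2} (\<lambda>t. t^m * cos (real n*t))"

definition KK :: "nat \<Rightarrow> real" where
  "KK m = (\<Sum>j\<le>m. \<bar>(-1)^j * fact j * real (m choose j) * (pi/2)^(m-j)\<bar>) + \<bar>(-1)^m * fact m * sin (real m*pi/2)\<bar>"

lemma abs_sign_div: "(Y::real) > 0 \<Longrightarrow> \<bar>(-1)^k * X / Y\<bar> = \<bar>X\<bar> * inverse Y"
  by (simp add: abs_mult divide_inverse)
lemma abs_sign_div1: "(Y::real) > 0 \<Longrightarrow> \<bar>(-1)^k / Y\<bar> = inverse Y"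
  by (simp add: divide_inverse abs_mult)

lemma bb_bound: "\<bar>bb m n\<bar> \<le> KK m * inverse (real n ^ 2)"
proof (cases "n = 0")
  case True then show ?thesis by (simp add: bb_def)
next
  case False
  then have n1: "real n \<ge> 1" by simp
  have p: "inverse (real n ^ k) \<le> inverse (real n ^ 2)" if "k \<ge> 2" for k
  proof -
    have "real n ^ 2 \<le> real n ^ k" by (rule power_increasing[OF that n1])
    then show ?thesis using n1 by (intro le_imp_inverse_le) auto
  qed
  let ?A = "\<lambda>j. (-1)^j * fact j * real (m choose j) * (pi/2)^(m-j)"
  let ?B = "(-1)^m * fact m * sin (real m*pi/2)"
  have "\<bar>bb m n\<bar> = \<bar>(\<Sum>j\<le>m. ?A j * ((-1)^Suc n * sin ((real n - real j)*pi/2) / real n^(j+2))) + ?B * ((-1)^Suc n / real n^(m+2))\<bar>"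
    unfolding bb_def b_decomp ..
  also have "\<dots> \<le> \<bar>(\<Sum>j\<le>m. ?A j * ((-1)^Suc n * sin ((real n - real j)*pi/2) / real n^(j+2)))\<bar> + \<bar>?B * ((-1)^Suc n / real n^(m+2))\<bar>"
    by (rule abs_triangle_ineq)
  also have "\<dots> \<le> (\<Sum>j\<le>m. \<bar>?A j * ((-1)^Suc n * sin ((real n - real j)*pi/2) / real n^(j+2))\<bar>) + \<bar>?B * ((-1)^Suc n / real n^(m+2))\<bar>"
    by (rule add_right_mono[OF sum_abs])
  also have "\<dots> \<le> (\<Sum>j\<le>m. \<bar>?A j\<bar> * inverse (real n ^ 2)) + \<bar>?B\<bar> * inverse (real n ^ 2)"
  proof (rule add_mono[OF sum_mono])
    fix j
    have "\<bar>(-1)^Suc n * sin ((real n - real j)*pi/2) / real n^(j+2)\<bar> \<le> inverse (real n ^ (j+2))"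
    proof -
      have "\<bar>(-1)^Suc n * sin ((real n - real j)*pi/2) / real n^(j+2)\<bar> = \<bar>sin ((real n - real j)*pi/2)\<bar> * inverse (real n ^ (j+2))"
        using n1 by (intro abs_sign_div) simp
      also have "\<dots> \<le> 1 * inverse (real n ^ (j+2))"
        by (rule mult_right_mono[OF abs_sin_le_one]) simp
      finally show ?thesis by simp
    qed
    also have "\<dots> \<le> inverse (real n ^ 2)" by (rule p) simp
    finally show "\<bar>?A j * ((-1)^Suc n * sin ((real n - real j)*pi/2) / real n^(j+2))\<bar> \<le> \<bar>?A j\<bar> * inverse (real n ^ 2)"
      unfolding abs_mult[of "?A j"] by (intro mult_left_mono) auto
  next
    have "\<bar>(-1)^Suc n / real n^(m+2)\<bar> \<le> inverse (real n ^ 2)"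
      using p[of "m+2"] n1 by (subst abs_sign_div1) auto
    then show "\<bar>?B * ((-1)^Suc n / real n^(m+2))\<bar> \<le> \<bar>?B\<bar> * inverse (real n ^ 2)"
      unfolding abs_mult[of ?B] by (intro mult_left_mono) auto
  qed
  also have "\<dots> = KK m * inverse (real n ^ 2)"
    by (simp add: KK_def sum_distrib_right distrib_right)
  finally show ?thesis .
qed

lemma bb_summable: "summable (\<lambda>n. \<bar>bb m n\<bar>)"
proof (rule summable_comparison_test[OF _ summable_mult[OF inverse_power_summable[of 2]]])
  show "\<exists>N. \<forall>n\<ge>N. norm \<bar>bb m n\<bar> \<le> KK m * inverse (real n ^ 2)"
    using bb_bound by auto
qed simp

lemma arg_bounds:
  fixes r t :: real
  assumes "0 \<le> r" "r \<le> 1" "t \<in> {0..pi/2}"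
  shows "1 \<le> 1 + 2*r*cos t + r^2" "1 + 2*r*cos t + r^2 \<le> 4"
proof -
  have c0: "0 \<le> cos t" using assms(3) by (intro cos_ge_zero) auto
  have c1: "cos t \<le> 1" by simp
  have "0 \<le> r * cos t" using assms c0 by simp
  then show "1 \<le> 1 + 2*r*cos t + r^2" by simp
  have "r * cos t \<le> 1" using assms c0 c1 by (intro mult_le_one) auto
  moreover have "r^2 \<le> 1" using assms by (simp add: power_le_one)
  ultimately show "1 + 2*r*cos t + r^2 \<le> 4" by simp
qed

lemma integral_pow_ln2: "integral {0..pi/2} (\<lambda>t. t^m * ln 2) = ln 2 * (pi/2)^(m+1) / real (m+1)"
proof -
  have "((\<lambda>t. t^m * ln 2) has_integral ((pi/2)^(m+1) / real (m+1) * ln 2 - 0^(m+1) / real (m+1) * ln 2)) {0..pi/2}"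
    apply (rule fundamental_theorem_of_calculus[of _ _ "\<lambda>t. t^(m+1) / real (m+1) * ln 2"])
     apply simp
    apply (rule has_vector_derivative_at_within)
    apply (subst has_real_derivative_iff_has_vector_derivative[symmetric])
    apply (rule derivative_eq_intros refl | simp)+
    done
  then show ?thesis by (simp only: integral_unique) (simp add: field_simps)
qed

lemma main_analytic:
  "integral {0..pi/2} (\<lambda>t. t^m * ln (cos (t/2))) = (\<Sum>n. bb m n) - ln 2 * (pi/2)^(m+1) / real (m+1)"
proof -
  define \<rho> where "\<rho> k = real k / real (Suc k)" for k
  have r0: "0 \<le> \<rho> k" and r1: "\<rho> k < 1" and r1': "\<rho> k \<le> 1" for k by (auto simp: \<rho>_def)
  have rl: "\<rho> \<longlonglongrightarrow> 1" unfolding \<rho>_def by (rule LIMSEQ_n_over_Suc_n)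
  define g where "g r t = t^m * (ln (1 + 2*r*cos t + r^2) / 2)" for r t :: real
  have S: "(\<lambda>n. (\<rho> k)^n * bb m n) sums integral {0..pi/2} (g (\<rho> k))" for k
    using interchange[OF r0 r1, of k m] unfolding bb_def g_def .
  have T: "(\<lambda>k. \<Sum>n. (\<rho> k)^n * bb m n) \<longlonglongrightarrow> (\<Sum>n. bb m n)"
  proof -
    have "eventually (\<lambda>k. summable (\<lambda>n. norm ((\<rho> k)^n * bb m n))) sequentially \<and>
           summable (\<lambda>n. norm (bb m n)) \<and>
           ((\<lambda>k. \<Sum>n. (\<rho> k)^n * bb m n) \<longlonglongrightarrow> (\<Sum>n. bb m n))"
    proof (rule tannerys_theorem[where M = "\<lambda>n. \<bar>bb m n\<bar>"])
      fix n
      show "(\<lambda>k. (\<rho> k)^n * bb m n) \<longlonglongrightarrow> bb m n"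
        using tendsto_mult_right[OF tendsto_power[OF rl, of n], of "bb m n"] by simp
    next
      show "\<forall>\<^sub>F (n, k) in at_top \<times>\<^sub>F sequentially. norm ((\<rho> k)^n * bb m n) \<le> \<bar>bb m n\<bar>"
      proof (rule always_eventually, clarify)
        fix n k
        have "\<bar>(\<rho> k)^n\<bar> \<le> 1" using r0[of k] r1'[of k] by (simp add: power_le_one)
        then show "norm ((\<rho> k)^n * bb m n) \<le> \<bar>bb m n\<bar>"
          by (simp add: abs_mult mult_left_le_one_le)
      qed
    qed (use bb_summable in auto)
    then show ?thesis by blast
  qed
  have cont: "continuous_on {0..pi/2} (g r)" if "0 \<le> r" "r \<le> 1" for r
  proof -
    have "\<forall>t\<in>{0..pi/2}. 1 + 2*r*cos t + r^2 \<noteq> 0"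
      using arg_bounds(1)[OF that] by force
    then show ?thesis unfolding g_def by (intro continuous_intros) auto
  qed
  have U: "(\<lambda>k. integral {0..pi/2} (g (\<rho> k))) \<longlonglongrightarrow> integral {0..pi/2} (g 1)"
  proof (rule dominated_convergence(2))
    show "g (\<rho> k) integrable_on {0..pi/2}" for k
      by (rule integrable_continuous_interval[OF cont[OF r0 r1']])
    show "(\<lambda>t. (pi/2)^m * (ln 4 / 2)) integrable_on {0..pi/2}" by (rule integrable_const_ivl)
    show "norm (g (\<rho> k) t) \<le> (pi/2)^m * (ln 4 / 2)" if t: "t \<in> {0..pi/2}" for k t
    proof -
      have tm: "\<bar>t^m\<bar> \<le> (pi/2)^m" using t by (simp add: power_abs power_mono)
      have a1: "1 \<le> 1 + 2*\<rho> k*cos t + (\<rho> k)^2" and a4: "1 + 2*\<rho> k*cos t + (\<rho> k)^2 \<le> 4"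
        using arg_bounds[OF r0 r1' t] by auto
      have l0: "0 \<le> ln (1 + 2*\<rho> k*cos t + (\<rho> k)^2)" using a1 by simp
      have l4: "ln (1 + 2*\<rho> k*cos t + (\<rho> k)^2) \<le> ln 4" using a1 a4 by simp
      have "norm (g (\<rho> k) t) = \<bar>t^m\<bar> * (ln (1 + 2*\<rho> k*cos t + (\<rho> k)^2) / 2)"
        unfolding g_def using l0 by (simp add: abs_mult)
      also have "\<dots> \<le> (pi/2)^m * (ln 4 / 2)"
        using tm l0 l4 by (intro mult_mono) auto
      finally show ?thesis .
    qed
    show "(\<lambda>k. g (\<rho> k) t) \<longlonglongrightarrow> g 1 t" if t: "t \<in> {0..pi/2}" for t
    proof -
      have "1 + 2*1*cos t + 1^2 \<noteq> (0::real)" using arg_bounds(1)[of 1 t] t by auto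
      then show ?thesis unfolding g_def
        by (intro tendsto_intros rl) auto
    qed
  qed
  have eq1: "integral {0..pi/2} (g 1) = (\<Sum>n. bb m n)"
  proof (rule LIMSEQ_unique[OF U])
    show "(\<lambda>k. integral {0..pi/2} (g (\<rho> k))) \<longlonglongrightarrow> (\<Sum>n. bb m n)"
      using T by (simp add: sums_unique[OF S, symmetric])
  qed
  have g1: "g 1 t = t^m * ln 2 + t^m * ln (cos (t/2))" if t: "t \<in> {0..pi/2}" for t
  proof -
    have cp: "0 < cos (t/2)" using t by (intro cos_gt_zero_pi) (use pi_gt_zero in \<open>auto simp del: pi_gt_zero\<close>)
    have "cos t = cos (2 * (t/2))" by simp
    also have "\<dots> = 2 * (cos (t/2))^2 - 1" by (rule cos_double_cos)
    finally have "1 + 2*1*cos t + 1^2 = (2 * cos (t/2))^2" by (simp add: power_mult_distrib)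
    then have "ln (1 + 2*1*cos t + 1^2) / 2 = ln ((2 * cos (t/2))^2) / 2"
      by (simp only:)
    also have "\<dots> = ln (2 * cos (t/2))"
      using ln_realpow[of "2 * cos (t/2)" 2] cp by simp
    also have "\<dots> = ln 2 + ln (cos (t/2))" using cp by (simp add: ln_mult)
    finally show ?thesis unfolding g_def by (simp add: distrib_left)
  qed
  have "integral {0..pi/2} (g 1) = integral {0..pi/2} (\<lambda>t. t^m * ln 2 + t^m * ln (cos (t/2)))"
    by (rule integral_cong) (use g1 in auto)
  also have "\<dots> = integral {0..pi/2} (\<lambda>t. t^m * ln 2) + integral {0..pi/2} (\<lambda>t. t^m * ln (cos (t/2)))"
  proof (rule integral_add)
    show "(\<lambda>t. t^m * ln 2) integrable_on {0..pi/2}"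
      by (intro integrable_continuous_interval continuous_intros)
    have "\<forall>t\<in>{0..pi/2}. cos (t/2) \<noteq> 0"
    proof
      fix t :: real assume "t \<in> {0..pi/2}"
      then have "0 < cos (t/2)" by (intro cos_gt_zero_pi) (use pi_gt_zero in \<open>auto simp del: pi_gt_zero\<close>)
      then show "cos (t/2) \<noteq> 0" by simp
    qed
    then show "(\<lambda>t. t^m * ln (cos (t/2))) integrable_on {0..pi/2}"
      by (intro integrable_continuous_interval continuous_intros) auto
  qed
  finally show ?thesis using eq1 integral_pow_ln2[of m] by simp
qed

definition uu :: "nat \<Rightarrow> nat \<Rightarrow> real" where
  "uu j n = (-1)^Suc n * sin ((real n - real j)*pi/2) / real n^(j+2)"

definition vv :: "nat \<Rightarrow> nat \<Rightarrow> real" where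
  "vv m n = (-1)^Suc n / real n^(m+2)"

lemma summable_inv_pow: "k \<ge> 2 \<Longrightarrow> summable (\<lambda>n. inverse (real n ^ k))"
  by (rule inverse_power_summable)

lemma uu_summable: "summable (uu j)"
proof (rule summable_comparison_test[OF _ summable_inv_pow[of "j+2"]])
  show "\<exists>N. \<forall>n\<ge>N. norm (uu j n) \<le> inverse (real n ^ (j+2))"
  proof (intro exI allI impI)
    fix n :: nat assume "n \<ge> 1"
    then have "\<bar>uu j n\<bar> = \<bar>sin ((real n - real j)*pi/2)\<bar> * inverse (real n ^ (j+2))"
      unfolding uu_def by (intro abs_sign_div) simp
    also have "\<dots> \<le> 1 * inverse (real n ^ (j+2))"
      by (rule mult_right_mono[OF abs_sin_le_one]) simp
    finally show "norm (uu j n) \<le> inverse (real n ^ (j+2))" by simp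
  qed
qed simp

lemma vv_summable: "summable (vv m)"
proof (rule summable_comparison_test[OF _ summable_inv_pow[of "m+2"]])
  show "\<exists>N. \<forall>n\<ge>N. norm (vv m n) \<le> inverse (real n ^ (m+2))"
  proof (intro exI allI impI)
    fix n :: nat assume "n \<ge> 1"
    then show "norm (vv m n) \<le> inverse (real n ^ (m+2))"
      unfolding vv_def real_norm_def by (subst abs_sign_div1) auto
  qed
qed simp

lemma sum_bb:
  "(\<Sum>n. bb m n) = (\<Sum>j\<le>m. ((-1)^j * fact j * real (m choose j) * (pi/2)^(m-j)) * (\<Sum>n. uu j n))
      + ((-1)^m * fact m * sin (real m*pi/2)) * (\<Sum>n. vv m n)"
proof -
  have "bb m = (\<lambda>n. (\<Sum>j\<le>m. ((-1)^j * fact j * real (m choose j) * (pi/2)^(m-j)) * uu j n)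
      + ((-1)^m * fact m * sin (real m*pi/2)) * vv m n)"
    by (rule ext) (simp only: bb_def b_decomp uu_def vv_def)
  then have "(\<Sum>n. bb m n) = (\<Sum>n. (\<Sum>j\<le>m. ((-1)^j * fact j * real (m choose j) * (pi/2)^(m-j)) * uu j n)
      + ((-1)^m * fact m * sin (real m*pi/2)) * vv m n)" by simp
  also have "\<dots> = (\<Sum>n. \<Sum>j\<le>m. ((-1)^j * fact j * real (m choose j) * (pi/2)^(m-j)) * uu j n)
      + (\<Sum>n. ((-1)^m * fact m * sin (real m*pi/2)) * vv m n)"
    by (intro suminf_add[symmetric] summable_sum summable_mult vv_summable uu_summable)
  also have "(\<Sum>n. \<Sum>j\<le>m. ((-1)^j * fact j * real (m choose j) * (pi/2)^(m-j)) * uu j n)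
      = (\<Sum>j\<le>m. \<Sum>n. ((-1)^j * fact j * real (m choose j) * (pi/2)^(m-j)) * uu j n)"
    by (intro suminf_sum summable_mult uu_summable)
  also have "\<dots> = (\<Sum>j\<le>m. ((-1)^j * fact j * real (m choose j) * (pi/2)^(m-j)) * (\<Sum>n. uu j n))"
    by (intro sum.cong refl suminf_mult uu_summable)
  also have "(\<Sum>n. ((-1)^m * fact m * sin (real m*pi/2)) * vv m n) = ((-1)^m * fact m * sin (real m*pi/2)) * (\<Sum>n. vv m n)"
    by (intro suminf_mult vv_summable)
  finally show ?thesis .
qed

lemma sin_lin: "sin ((real a - real b) * pi) = 0"
  by (simp add: left_diff_distrib sin_diff)

lemma cos_lin: "cos ((real a - real b) * pi) = (-1)^(a+b)"
  by (simp add: left_diff_distrib cos_diff power_add)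

lemma powr_nat1: "(real (n+1)) powr (real k) = real (n+1) ^ k"
  by (rule powr_realpow) simp
lemma powr_nat2: "(real (2*n+1)) powr (real k) = real (2*n+1) ^ k"
  by (rule powr_realpow) simp

lemma suminf_shift0:
  fixes f :: "nat \<Rightarrow> real"
  assumes "summable f" "f 0 = 0"
  shows "(\<Sum>n. f n) = (\<Sum>n. f (Suc n))"
  using suminf_split_head[OF assms(1)] assms(2) by simp

lemma vv_sum: "(\<Sum>n. vv m n) = zeta_E (real (m+2))"
proof -
  have "(\<Sum>n. vv m n) = (\<Sum>n. vv m (Suc n))"
    by (rule suminf_shift0[OF vv_summable]) (simp add: vv_def)
  also have "\<dots> = zeta_E (real (m+2))"
    unfolding zeta_E_def vv_def powr_nat1
    by (intro arg_cong[where f=suminf] ext) simp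
  finally show ?thesis .
qed

lemma sums_cancel:
  fixes c :: real
  assumes "(\<lambda>p. c * f p) sums U" "c \<noteq> 0"
  shows "f sums (U / c)"
proof -
  have "(\<lambda>p. inverse c * (c * f p)) sums (inverse c * U)" by (rule sums_mult[OF assms(1)])
  then show ?thesis using assms(2) by (simp add: field_simps)
qed

lemma pair_set: "{p*2..<p*2+2} = {2*p, 2*p+1::nat}" by auto

lemma uu_even: "(\<Sum>n. uu (2*k) n) = (-1)^k * dbeta (real (2*k+2))"
proof -
  have g: "(\<lambda>p. \<Sum>n\<in>{p*2..<p*2+2}. uu (2*k) n) sums (\<Sum>n. uu (2*k) n)"
    by (rule sums_group[OF summable_sums[OF uu_summable]]) simp
  have e: "(\<Sum>n\<in>{p*2..<p*2+2}. uu (2*k) n) = (-1)^k * ((-1)^p / real (2*p+1) powr real (2*k+2))" for p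
  proof -
    have a1: "(real (2*p) - real (2*k))*pi/2 = (real p - real k)*pi" by (simp add: field_simps)
    have a2: "(real (2*p+1) - real (2*k))*pi/2 = (real p - real k)*pi + pi/2" by (simp add: field_simps)
    have "uu (2*k) (2*p) = 0" unfolding uu_def a1 sin_lin by simp
    moreover have "uu (2*k) (2*p+1) = (-1)^(p+k) / real (2*p+1)^(2*k+2)"
      unfolding uu_def a2 sin_add by (simp add: cos_lin sin_lin)
    ultimately show ?thesis unfolding pair_set powr_nat2 by (simp add: power_add)
  qed
  have "(\<lambda>p. (-1)^k * ((-1)^p / real (2*p+1) powr real (2*k+2))) sums (\<Sum>n. uu (2*k) n)"
    using g unfolding e .
  from sums_cancel[OF this] have "(\<lambda>p. (-1)^p / real (2*p+1) powr real (2*k+2)) sums ((\<Sum>n. uu (2*k) n) / (-1)^k)"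
    by simp
  then have "dbeta (real (2*k+2)) = (\<Sum>n. uu (2*k) n) / (-1)^k"
    unfolding dbeta_def by (rule sums_unique[symmetric])
  then show ?thesis by (simp add: field_simps)
qed

lemma uu_odd: "(\<Sum>n. uu (2*k+1) n) = (-1)^(k+1) * zeta_E (real (2*k+3)) / 2^(2*k+3)"
proof -
  define w where "w p = (-1)^p / real p^(2*k+3)" for p
  define c :: real where "c = (-1)^k / 2^(2*k+3)"
  have c0: "c \<noteq> 0" by (simp add: c_def)
  have g: "(\<lambda>p. \<Sum>n\<in>{p*2..<p*2+2}. uu (2*k+1) n) sums (\<Sum>n. uu (2*k+1) n)"
    by (rule sums_group[OF summable_sums[OF uu_summable]]) simp
  have e: "(\<Sum>n\<in>{p*2..<p*2+2}. uu (2*k+1) n) = c * w p" for p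
  proof -
    have a1: "(real (2*p) - real (2*k+1))*pi/2 = (real p - real k)*pi - pi/2" by (simp add: field_simps)
    have a2: "(real (2*p+1) - real (2*k+1))*pi/2 = (real p - real k)*pi" by (simp add: field_simps)
    have "uu (2*k+1) (2*p+1) = 0" unfolding uu_def a2 sin_lin by simp
    moreover have h: "real (2*p) ^ (2*k+1+2) = 2^(2*k+3) * real p ^ (2*k+3)"
    proof -
      have "2*k+1+2 = 2*k+3" by simp
      then show ?thesis by (simp only: of_nat_mult power_mult_distrib of_nat_numeral)
    qed
    moreover have "uu (2*k+1) (2*p) = (-1)^(p+k) / (2^(2*k+3) * real p ^ (2*k+3))"
      unfolding uu_def a1 sin_diff h by (simp add: cos_lin sin_lin)
    ultimately show ?thesis unfolding pair_set c_def w_def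
      by (simp add: power_add mult_ac)
  qed
  have "(\<lambda>p. c * w p) sums (\<Sum>n. uu (2*k+1) n)" using g unfolding e .
  from sums_cancel[OF this c0] have ws: "w sums ((\<Sum>n. uu (2*k+1) n) / c)" .
  have "(\<Sum>n. uu (2*k+1) n) / c = (\<Sum>p. w p)" using ws by (rule sums_unique)
  also have "\<dots> = (\<Sum>p. w (Suc p))"
    by (rule suminf_shift0[OF sums_summable[OF ws]]) (simp add: w_def)
  also have "\<dots> = (\<Sum>p. - ((-1)^p / real (p+1) powr real (2*k+3)))"
    unfolding w_def powr_nat1 by (intro arg_cong[where f=suminf] ext) simp
  also have "\<dots> = - zeta_E (real (2*k+3))"
    unfolding zeta_E_def
  proof (rule suminf_minus)
    have "summable (\<lambda>p. w (Suc p))" using sums_summable[OF ws] by (simp add: summable_Suc_iff)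
    then have "summable (\<lambda>p. - w (Suc p))" by (rule summable_minus)
    then show "summable (\<lambda>p. (-1)^p / real (p+1) powr real (2*k+3))"
      unfolding w_def powr_nat1 by simp
  qed
  finally have "(\<Sum>n. uu (2*k+1) n) = - c * zeta_E (real (2*k+3))"
    using c0 by (simp add: field_simps)
  then show ?thesis by (simp add: c_def)
qed

lemma split_sum:
  fixes f :: "nat \<Rightarrow> real"
  shows "(\<Sum>j\<le>m. f j) = (\<Sum>k=0..m div 2. f (2*k)) + (\<Sum>k=1..(m+1) div 2. f (2*k-1))"
proof (induction m)
  case 0
  then show ?case by simp
next
  case (Suc m)
  show ?case
  proof (cases "even m")
    case True
    then obtain q where q: "m = 2*q" by blast
    have "(\<Sum>j\<le>Suc m. f j) = (\<Sum>k=0..m div 2. f (2*k)) + (\<Sum>k=1..(m+1) div 2. f (2*k-1)) + f (Suc m)"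
      using Suc by simp
    also have "\<dots> = (\<Sum>k=0..Suc m div 2. f (2*k)) + (\<Sum>k=1..(Suc m+1) div 2. f (2*k-1))"
      using q by (simp add: sum.cl_ivl_Suc)
    finally show ?thesis .
  next
    case False
    then obtain q where q: "m = 2*q+1" using oddE by blast
    have "(\<Sum>j\<le>Suc m. f j) = (\<Sum>k=0..m div 2. f (2*k)) + (\<Sum>k=1..(m+1) div 2. f (2*k-1)) + f (Suc m)"
      using Suc by simp
    also have "\<dots> = (\<Sum>k=0..Suc m div 2. f (2*k)) + (\<Sum>k=1..(Suc m+1) div 2. f (2*k-1))"
      using q by (simp add: sum.cl_ivl_Suc)
    finally show ?thesis .
  qed
qed

lemma sin_shift: "(-1)^m * sin (real m*pi/2) = sin (real (m+2)*pi/2)"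
proof -
  have "sin (real (m+2)*pi/2) = sin (real m*pi/2 + pi)" by (simp add: field_simps)
  also have "\<dots> = - sin (real m*pi/2)" by simp
  finally have e: "sin (real (m+2)*pi/2) = - sin (real m*pi/2)" .
  show ?thesis
  proof (cases "even m")
    case True
    then obtain q where q: "m = 2*q" by blast
    have "sin (real m*pi/2) = 0" unfolding q by simp
    then show ?thesis using e by simp
  next
    case False
    then show ?thesis using e by simp
  qed
qed

lemma floor_half: "nat \<lfloor>real m / 2\<rfloor> = m div 2"
proof -
  have "\<lfloor>real m / 2\<rfloor> = int (m div 2)"
    using floor_divide_of_nat_eq[of m 2] by simp
  then show ?thesis by simp
qed

lemma ceiling_half: "nat \<lceil>real m / 2\<rceil> = (m+1) div 2"
proof -
  have "\<lceil>real m / 2\<rceil> = int ((m+1) div 2)"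
  proof (cases "even m")
    case True
    then obtain q where q: "m = 2*q" by blast
    then show ?thesis by (intro ceiling_unique) auto
  next
    case False
    then obtain q where q: "m = 2*q+1" using oddE by blast
    then show ?thesis by (intro ceiling_unique) auto
  qed
  then show ?thesis by simp
qed

lemma term_even:
  "((-1)^(2*k) * fact (2*k) * real (m choose (2*k)) * (pi/2)^(m-2*k)) * (\<Sum>n. uu (2*k) n)
   = (-1) ^ k * fact (2 * k) * real ((m + 2 - 2) choose (2 * k)) * (pi / 2) ^ (m + 2 - 2 * k - 2)
          * dbeta (real (2 * k + 2))"
proof -
  have "m + 2 - 2 * k - 2 = m - 2*k" by simp
  then show ?thesis unfolding uu_even by simp
qed

lemma term_odd:
  assumes "k \<ge> 1"
  shows "((-1)^(2*k-1) * fact (2*k-1) * real (m choose (2*k-1)) * (pi/2)^(m-(2*k-1))) * (\<Sum>n. uu (2*k-1) n)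
   = (-1) ^ (k - 1) * fact (2 * k - 1) / 2 ^ (2 * k + 1) * real ((m + 2 - 2) choose (2 * k - 1))
          * (pi / 2) ^ (m + 2 - 2 * k - 1) * zeta_E (real (2 * k + 1))"
proof -
  obtain q where q: "k = q + 1" using assms by (metis add.commute le_add_diff_inverse)
  have e1: "2*k-1 = 2*q+1" "m + 2 - 2 * k - 1 = m - (2*q+1)" "2*q+3 = 2*k+1" "k - 1 = q" using q by auto
  have "(-1::real)^(2*q+1) = -1" by simp
  then show ?thesis unfolding e1(1,2,4) uu_odd e1(3) using q
    by (simp add: field_simps power_add)
qed

theorem theorem2p3:
  fixes r :: nat
  assumes "r \<ge> 2"
  shows "integral {0..pi/2} (\<lambda>\<theta>. \<theta> ^ (r - 2) * ln (cos (\<theta> / 2))) =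
     - ln 2 / (real r - 1) * (pi / 2) ^ (r - 1)
     + fact (r - 2) * sin (real r * pi / 2) * zeta_E (real r)
     + (\<Sum>k = 0..nat \<lfloor>(real r - 2) / 2\<rfloor>.
          (-1) ^ k * fact (2 * k) * real ((r - 2) choose (2 * k)) * (pi / 2) ^ (r - 2 * k - 2)
          * dbeta (real (2 * k + 2)))
     + (\<Sum>k = 1..nat \<lceil>(real r - 2) / 2\<rceil>.
          (-1) ^ (k - 1) * fact (2 * k - 1) / 2 ^ (2 * k + 1) * real ((r - 2) choose (2 * k - 1))
          * (pi / 2) ^ (r - 2 * k - 1) * zeta_E (real (2 * k + 1)))"
proof -
  obtain m where r: "r = m + 2" using assms by (metis add.commute le_add_diff_inverse)
  have rr: "real r - 2 = real m" "real r - 1 = real (m+1)" "r - 1 = m + 1" "r - 2 = m" using r by auto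
  define A where "A j = (-1)^j * fact j * real (m choose j) * (pi/2)^(m-j)" for j
  have L: "integral {0..pi/2} (\<lambda>\<theta>. \<theta> ^ (r - 2) * ln (cos (\<theta> / 2)))
     = (\<Sum>j\<le>m. A j * (\<Sum>n. uu j n)) + ((-1)^m * fact m * sin (real m*pi/2)) * (\<Sum>n. vv m n)
       - ln 2 * (pi/2)^(m+1) / real (m+1)"
    unfolding rr(4) main_analytic sum_bb A_def ..
  have S: "(\<Sum>j\<le>m. A j * (\<Sum>n. uu j n)) =
     (\<Sum>k = 0..nat \<lfloor>(real r - 2) / 2\<rfloor>.
          (-1) ^ k * fact (2 * k) * real ((r - 2) choose (2 * k)) * (pi / 2) ^ (r - 2 * k - 2)
          * dbeta (real (2 * k + 2)))
     + (\<Sum>k = 1..nat \<lceil>(real r - 2) / 2\<rceil>.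
          (-1) ^ (k - 1) * fact (2 * k - 1) / 2 ^ (2 * k + 1) * real ((r - 2) choose (2 * k - 1))
          * (pi / 2) ^ (r - 2 * k - 1) * zeta_E (real (2 * k + 1)))"
    unfolding split_sum[of "\<lambda>j. A j * (\<Sum>n. uu j n)"] rr(1) floor_half ceiling_half
  proof (intro arg_cong2[where f="(+)"] sum.cong refl)
    fix k assume "k \<in> {0..m div 2}"
    show "A (2*k) * (\<Sum>n. uu (2*k) n) = (-1) ^ k * fact (2 * k) * real ((r - 2) choose (2 * k)) * (pi / 2) ^ (r - 2 * k - 2)
          * dbeta (real (2 * k + 2))"
      unfolding A_def r by (rule term_even)
  next
    fix k assume "k \<in> {1..(m+1) div 2}"
    then have k1: "k \<ge> 1" by simp
    show "A (2*k-1) * (\<Sum>n. uu (2*k-1) n) = (-1) ^ (k - 1) * fact (2 * k - 1) / 2 ^ (2 * k + 1) * real ((r - 2) choose (2 * k - 1))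
          * (pi / 2) ^ (r - 2 * k - 1) * zeta_E (real (2 * k + 1))"
      unfolding A_def r by (rule term_odd[OF k1])
  qed
  have B: "((-1)^m * fact m * sin (real m*pi/2)) * (\<Sum>n. vv m n) = fact (r - 2) * sin (real r * pi / 2) * zeta_E (real r)"
    unfolding vv_sum rr(4) using sin_shift[of m] r by (simp add: mult_ac)
  show ?thesis unfolding L S B[symmetric] rr(2,3)
    by (simp add: field_simps)
qed

end
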